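(* Let $\mathbb{X}$ be a two-dimensional real Banach space, $z\in S_{\mathbb{X}}$ and $\epsilon\in[0,1)$. Then the set $A=\left[\bigcup_{\alpha\in\mathbb{R}}\overline{B}(\alpha z,\epsilon)\right]\cap S_{\mathbb{X}}$ has at most two connected components.
   Context: $\overline{B}(w,\epsilon)=\{u\in\mathbb{X}:\|u-w\|\leq\epsilon\}$ and $S_{\mathbb{X}}$ is the unit sphere of $\mathbb{X}$. *)

theory Defs
  imports "HOL-Analysis.Analysis"
begin

end

theory Submission
  imports Defs
begin

lemma nb_aux:
  fixes x z :: "'a::real_normed_vector"
  assumes x: "norm x = 1" and z: "norm z = 1" and xa: "norm (x - \<alpha> *\<^sub>R z) \<le> \<epsilon>"
    and e: "\<epsilon> < 1" and a: "\<alpha> > 0" and s: "s \<ge> 0"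
  shows "1 \<le> norm (x + s *\<^sub>R z)"
proof (rule ccontr)
  assume h: "\<not> 1 \<le> norm (x + s *\<^sub>R z)"
  define l where "l = s / (s + \<alpha>)"
  have l0: "0 \<le> l" and l1: "l < 1" using a s by (auto simp: l_def field_simps)
  have eq: "x = l *\<^sub>R (x - \<alpha> *\<^sub>R z) + (1 - l) *\<^sub>R (x + s *\<^sub>R z)"
  proof -
    have "l * \<alpha> = (1 - l) * s" using a s by (simp add: l_def field_simps)
    hence "l *\<^sub>R (x - \<alpha> *\<^sub>R z) + (1 - l) *\<^sub>R (x + s *\<^sub>R z) = x + ((1 - l) * s - l * \<alpha>) *\<^sub>R z"
      by (simp add: algebra_simps, metis scaleR_add_left)
    also have "\<dots> = x" using \<open>l * \<alpha> = (1 - l) * s\<close> by simp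
    finally show ?thesis by simp
  qed
  have "1 = norm (l *\<^sub>R (x - \<alpha> *\<^sub>R z) + (1 - l) *\<^sub>R (x + s *\<^sub>R z))" using eq x by simp
  also have "\<dots> \<le> l * norm (x - \<alpha> *\<^sub>R z) + (1 - l) * norm (x + s *\<^sub>R z)"
    using l0 l1 by (metis (no_types) abs_of_nonneg diff_ge_0_iff_ge less_imp_le norm_scaleR norm_triangle_ineq)
  also have "\<dots> < l + (1 - l)"
  proof -
    have "l * norm (x - \<alpha> *\<^sub>R z) \<le> l" using l0 xa e
      by (metis dual_order.trans less_imp_le mult_left_mono mult.right_neutral)
    moreover have "(1 - l) * norm (x + s *\<^sub>R z) < 1 - l" using h l1 by simp
    ultimately show ?thesis by linarith
  qed
  finally show False by simp
qed

lemma nb: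
  fixes x z :: "'a::real_normed_vector"
  assumes x: "norm x = 1" and z: "norm z = 1" and xa: "norm (x - \<alpha> *\<^sub>R z) \<le> \<epsilon>"
    and e: "\<epsilon> < 1" and a: "\<alpha> > 0" and u: "0 \<le> u" "u \<le> 1"
  shows "1 - u \<le> norm ((1 - u) *\<^sub>R x + u *\<^sub>R z)"
proof (cases "u = 1")
  case True then show ?thesis by simp
next
  case False
  hence u1: "u < 1" using u by simp
  define s where "s = u / (1 - u)"
  have s0: "s \<ge> 0" using u u1 by (simp add: s_def)
  have "(1 - u) *\<^sub>R x + u *\<^sub>R z = (1 - u) *\<^sub>R (x + s *\<^sub>R z)"
  proof -
    have "(1 - u) * s = u" using u1 by (simp add: s_def)
    moreover have "(1 - u) *\<^sub>R (x + s *\<^sub>R z) = (1 - u) *\<^sub>R x + ((1 - u) * s) *\<^sub>R z"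
      by (simp add: scaleR_right_distrib)
    ultimately show ?thesis by simp
  qed
  hence "norm ((1 - u) *\<^sub>R x + u *\<^sub>R z) = (1 - u) * norm (x + s *\<^sub>R z)" using u1 by simp
  moreover have "1 \<le> norm (x + s *\<^sub>R z)" by (rule nb_aux[OF x z xa e a s0])
  ultimately show ?thesis using u1 by (simp add: mult_le_cancel_left1)
qed

lemma conn_to:
  fixes x z :: "'a::real_normed_vector" and \<epsilon> :: real
  defines "A \<equiv> (\<Union>\<alpha>::real. cball (\<alpha> *\<^sub>R z) \<epsilon>) \<inter> sphere 0 1"
  assumes x: "norm x = 1" and z: "norm z = 1" and xa: "norm (x - \<alpha> *\<^sub>R z) \<le> \<epsilon>"
    and e: "\<epsilon> < 1" and a: "\<alpha> > 0"
  shows "connected_component A x z"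
proof -
  define p where "p u = (1 - u) *\<^sub>R x + u *\<^sub>R z" for u :: real
  define g where "g u = (1 / norm (p u)) *\<^sub>R p u" for u
  have pnz: "norm (p u) > 0" if "0 \<le> u" "u \<le> 1" for u
  proof (cases "u = 1")
    case True then show ?thesis using z by (simp add: p_def)
  next
    case False
    then show ?thesis using nb[OF x z xa e a that] that unfolding p_def by linarith
  qed
  have cont: "continuous_on {0..1} g"
    unfolding g_def p_def
    apply (intro continuous_intros)
    using pnz unfolding p_def by auto
  have sub: "g ` {0..1} \<subseteq> A"
  proof
    fix y assume "y \<in> g ` {0..1}"
    then obtain u where u: "0 \<le> u" "u \<le> 1" and y: "y = g u" by auto
    have np: "norm (p u) > 0" using pnz u by auto
    have nn: "1 - u \<le> norm (p u)" using nb[OF x z xa e a u] by (simp add: p_def)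
    define \<beta> where "\<beta> = ((1 - u) * \<alpha> + u) / norm (p u)"
    have "y - \<beta> *\<^sub>R z = (1 / norm (p u)) *\<^sub>R (p u - ((1 - u) * \<alpha> + u) *\<^sub>R z)"
      using np by (simp add: y g_def \<beta>_def scaleR_diff_right)
    also have "p u - ((1 - u) * \<alpha> + u) *\<^sub>R z = (1 - u) *\<^sub>R (x - \<alpha> *\<^sub>R z)"
      by (simp add: p_def algebra_simps)
    finally have "norm (y - \<beta> *\<^sub>R z) = (1 - u) * norm (x - \<alpha> *\<^sub>R z) / norm (p u)"
      using u np by simp
    also have "\<dots> \<le> (1 - u) * \<epsilon> / norm (p u)"
      using u np xa by (intro divide_right_mono mult_left_mono) auto
    also have "\<dots> \<le> \<epsilon>"
    proof -
      have e0: "0 \<le> \<epsilon>" using xa norm_ge_zero order_trans by blast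
      have "(1 - u) * \<epsilon> \<le> norm (p u) * \<epsilon>" using nn e0 by (simp add: mult_right_mono)
      thus ?thesis using np by (simp add: divide_simps mult.commute)
    qed
    finally have d: "norm (y - \<beta> *\<^sub>R z) \<le> \<epsilon>" .
    have "norm y = 1" using np by (simp add: y g_def)
    thus "y \<in> A" using d unfolding A_def by (auto simp: dist_norm norm_minus_commute)
  qed
  have g0: "g 0 = x" using x by (simp add: g_def p_def)
  have g1: "g 1 = z" using z by (simp add: g_def p_def)
  show ?thesis
    apply (rule connected_componentI[OF connected_continuous_image[OF cont connected_Icc] sub])
    using g0 g1 by (auto intro!: image_eqI)
qed

theorem lemma2p2:
  fixes z :: "'a::banach" and \<epsilon> :: real
  assumes "dim (UNIV :: 'a set) = 2"
    and "z \<in> sphere 0 1"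
    and "0 \<le> \<epsilon>" and "\<epsilon> < 1"
  shows "finite (components ((\<Union>\<alpha>::real. cball (\<alpha> *\<^sub>R z) \<epsilon>) \<inter> sphere 0 1))
       \<and> card (components ((\<Union>\<alpha>::real. cball (\<alpha> *\<^sub>R z) \<epsilon>) \<inter> sphere 0 1)) \<le> 2"
proof -
  define A where "A = (\<Union>\<alpha>::real. cball (\<alpha> *\<^sub>R z) \<epsilon>) \<inter> sphere 0 1"
  have z: "norm z = 1" using assms(2) by simp
  have A': "A = (\<Union>\<alpha>::real. cball (\<alpha> *\<^sub>R (-z)) \<epsilon>) \<inter> sphere 0 1"
  proof -
    have "(\<Union>\<alpha>::real. cball (\<alpha> *\<^sub>R z) \<epsilon>) = (\<Union>\<alpha>::real. cball (\<alpha> *\<^sub>R (-z)) \<epsilon>)"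
    proof (intro equalityI subsetI)
      fix y assume "y \<in> (\<Union>\<alpha>::real. cball (\<alpha> *\<^sub>R z) \<epsilon>)"
      then obtain a where "y \<in> cball (a *\<^sub>R z) \<epsilon>" by auto
      hence "y \<in> cball ((-a) *\<^sub>R (-z)) \<epsilon>" by simp
      thus "y \<in> (\<Union>\<alpha>::real. cball (\<alpha> *\<^sub>R (-z)) \<epsilon>)" by blast
    next
      fix y assume "y \<in> (\<Union>\<alpha>::real. cball (\<alpha> *\<^sub>R (-z)) \<epsilon>)"
      then obtain a where "y \<in> cball (a *\<^sub>R (-z)) \<epsilon>" by auto
      hence "y \<in> cball ((-a) *\<^sub>R z) \<epsilon>" by simp
      thus "y \<in> (\<Union>\<alpha>::real. cball (\<alpha> *\<^sub>R z) \<epsilon>)" by blast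
    qed
    thus ?thesis unfolding A_def by simp
  qed
  have key: "connected_component A x z \<or> connected_component A x (-z)" if xA: "x \<in> A" for x
  proof -
    from xA obtain a where xa: "norm (x - a *\<^sub>R z) \<le> \<epsilon>" and x: "norm x = 1"
      unfolding A_def by (auto simp: dist_norm norm_minus_commute)
    have "a \<noteq> 0" using xa x assms(4) by auto
    then consider "a > 0" | "a < 0" by linarith
    then show ?thesis
    proof cases
      case 1
      then show ?thesis using conn_to[OF x z xa assms(4) 1] unfolding A_def by blast
    next
      case 2
      have xa': "norm (x - (-a) *\<^sub>R (-z)) \<le> \<epsilon>" using xa by simp
      have "connected_component A x (-z)"
        using conn_to[OF x _ xa' assms(4)] 2 z unfolding A' by simp
      thus ?thesis by blast
    qed
  qed
  have "components A \<subseteq> {connected_component_set A z, connected_component_set A (-z)}"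
  proof
    fix c assume "c \<in> components A"
    then obtain x where xA: "x \<in> A" and c: "c = connected_component_set A x"
      by (auto simp: components_def)
    from key[OF xA] show "c \<in> {connected_component_set A z, connected_component_set A (-z)}"
      using c connected_component_eq by blast
  qed
  then have "finite (components A) \<and> card (components A) \<le> 2"
  proof -
    assume h: "components A \<subseteq> {connected_component_set A z, connected_component_set A (-z)}"
    have f: "finite {connected_component_set A z, connected_component_set A (-z)}" by simp
    have "card {connected_component_set A z, connected_component_set A (-z)} \<le> 2"
      by (simp add: card_insert_if)
    thus ?thesis using card_mono[OF f h] finite_subset[OF h f] by linarith
  qed
  thus ?thesis unfolding A_def .
qed

end
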